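(* Consider the context-free grammar with nonterminals $S,R$, terminals $\bullet,(,)$, start symbol $S$ and rules $$S\to \bullet \mid S\bullet \mid (R) \mid S(R),\qquad R\to (\bullet) \mid (R) \mid (S(R)) \mid (S\bullet).$$ Then the grammar is non-ambiguous, the language generated from $S$ is exactly the set of nonempty canonical secondary structures (in dot-bracket notation), and the language generated from $R$ is exactly the set of nonempty secondary structures $T$ such that $(T)$ is canonical.
   Context: A secondary structure on $[1,n]$ (with $\theta=1$) is a set of pairs $(i,j)$, $1\le i<j\le n$, with no crossing pairs ($i<k<j<\ell$), each position in at most one pair, and $j-i>1$ for each pair; it is written as a dot-bracket word over $\{\bullet,(,)\}$. It is canonical if there is no pair $(i,j)$ with both $(i-1,j+1)$ and $(i+1,j-1)$ absent. A grammar is non-ambiguous if no word has two distinct leftmost derivations. *)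

theory Defs
  imports Main
begin

datatype sym = Dot | Op | Cl

text \<open>Secondary structure on [1,n] with theta = 1: set of pairs (i,j), 1 <= i < j <= n,
  j - i > 1, non-crossing, each position in at most one pair.\<close>
definition sec_struct :: "nat \<Rightarrow> (nat \<times> nat) set \<Rightarrow> bool" where
  "sec_struct n P \<longleftrightarrow>
     (\<forall>(i,j)\<in>P. 1 \<le> i \<and> i < j \<and> j \<le> n \<and> j - i > 1) \<and>
     (\<forall>(i,j)\<in>P. \<forall>(k,l)\<in>P. \<not> (i < k \<and> k < j \<and> j < l)) \<and>
     (\<forall>(i,j)\<in>P. \<forall>(k,l)\<in>P. (i,j) \<noteq> (k,l) \<longrightarrow> {i,j} \<inter> {k,l} = {})"

definition dotbracket :: "nat \<Rightarrow> (nat \<times> nat) set \<Rightarrow> sym list" where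
  "dotbracket n P = map (\<lambda>k. if \<exists>j. (k,j) \<in> P then Op
                              else if \<exists>i. (i,k) \<in> P then Cl else Dot) [1..<n+1]"

definition canonical :: "(nat \<times> nat) set \<Rightarrow> bool" where
  "canonical P \<longleftrightarrow> \<not> (\<exists>(i,j)\<in>P. (i-1, j+1) \<notin> P \<and> (i+1, j-1) \<notin> P)"

definition is_ss :: "sym list \<Rightarrow> bool" where
  "is_ss w \<longleftrightarrow> (\<exists>P. sec_struct (length w) P \<and> dotbracket (length w) P = w)"

definition is_canonical_ss :: "sym list \<Rightarrow> bool" where
  "is_canonical_ss w \<longleftrightarrow>
     (\<exists>P. sec_struct (length w) P \<and> dotbracket (length w) P = w \<and> canonical P)"

datatype nt = S | R

datatype gsym = Tm sym | Nt nt

definition rules :: "(nt \<times> gsym list) set" where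
  "rules = {
     (S, [Tm Dot]),
     (S, [Nt S, Tm Dot]),
     (S, [Tm Op, Nt R, Tm Cl]),
     (S, [Nt S, Tm Op, Nt R, Tm Cl]),
     (R, [Tm Op, Tm Dot, Tm Cl]),
     (R, [Tm Op, Nt R, Tm Cl]),
     (R, [Tm Op, Nt S, Tm Op, Nt R, Tm Cl, Tm Cl]),
     (R, [Tm Op, Nt S, Tm Dot, Tm Cl])}"

definition step :: "gsym list \<Rightarrow> gsym list \<Rightarrow> bool" where
  "step \<alpha> \<beta> \<longleftrightarrow> (\<exists>u v A rhs. (A, rhs) \<in> rules \<and> \<alpha> = u @ Nt A # v \<and> \<beta> = u @ rhs @ v)"

definition lang :: "nt \<Rightarrow> sym list set" where
  "lang A = {w. step\<^sup>*\<^sup>* [Nt A] (map Tm w)}"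

definition lm_step :: "nt \<times> gsym list \<Rightarrow> gsym list \<Rightarrow> gsym list \<Rightarrow> bool" where
  "lm_step r \<alpha> \<beta> \<longleftrightarrow> r \<in> rules \<and>
     (\<exists>u v. \<alpha> = map Tm u @ Nt (fst r) # v \<and> \<beta> = map Tm u @ snd r @ v)"

text \<open>A leftmost derivation from \<alpha> to \<gamma>, recorded as the sequence of rules applied
  (which determines the sequence of sentential forms).\<close>
inductive lm_deriv :: "gsym list \<Rightarrow> (nt \<times> gsym list) list \<Rightarrow> gsym list \<Rightarrow> bool" where
  lm_nil: "lm_deriv \<alpha> [] \<alpha>"
| lm_cons: "lm_step r \<alpha> \<beta> \<Longrightarrow> lm_deriv \<beta> rs \<gamma> \<Longrightarrow> lm_deriv \<alpha> (r # rs) \<gamma>"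

definition non_ambiguous :: "nt \<Rightarrow> bool" where
  "non_ambiguous A \<longleftrightarrow>
     (\<forall>w rs1 rs2. lm_deriv [Nt A] rs1 (map Tm w) \<longrightarrow> lm_deriv [Nt A] rs2 (map Tm w) \<longrightarrow> rs1 = rs2)"

end

theory Submission
  imports Defs
begin


inductive L :: "nt \<Rightarrow> sym list \<Rightarrow> bool" where
  L1: "L S [Dot]"
| L2: "L S u \<Longrightarrow> L S (u @ [Dot])"
| L3: "L R v \<Longrightarrow> L S (Op # v @ [Cl])"
| L4: "L S u \<Longrightarrow> L R v \<Longrightarrow> L S (u @ Op # v @ [Cl])"
| L5: "L R [Op, Dot, Cl]"
| L6: "L R v \<Longrightarrow> L R (Op # v @ [Cl])"
| L7: "L S u \<Longrightarrow> L R v \<Longrightarrow> L R (Op # u @ Op # v @ [Cl, Cl])"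
| L8: "L S u \<Longrightarrow> L R (Op # u @ [Dot, Cl])"

fun gen :: "gsym list \<Rightarrow> sym list \<Rightarrow> bool" where
  "gen [] w = (w = [])"
| "gen (Tm a # xs) w = (\<exists>w'. w = a # w' \<and> gen xs w')"
| "gen (Nt A # xs) w = (\<exists>u v. w = u @ v \<and> L A u \<and> gen xs v)"

lemma gen_append: "gen (xs @ ys) w \<longleftrightarrow> (\<exists>u v. w = u @ v \<and> gen xs u \<and> gen ys v)"
proof (induction xs arbitrary: w)
  case Nil then show ?case by auto
next
  case (Cons x xs)
  show ?case
  proof (cases x)
    case (Tm a) then show ?thesis using Cons by auto (metis append_Cons)+
  next
    case (Nt A) then show ?thesis using Cons by simp (metis append.assoc)
  qed
qed

lemma gen_map_Tm: "gen (map Tm u) w \<longleftrightarrow> w = u"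
  by (induction u arbitrary: w) auto

lemma gen_rule: "(A, rhs) \<in> rules \<Longrightarrow> gen rhs w \<Longrightarrow> L A w"
  unfolding rules_def by (auto intro: L.intros)

lemma gen_step: "step \<alpha> \<beta> \<Longrightarrow> gen \<beta> w \<Longrightarrow> gen \<alpha> w"
proof -
  assume "step \<alpha> \<beta>" "gen \<beta> w"
  then obtain u v A rhs where r: "(A, rhs) \<in> rules" and a: "\<alpha> = u @ Nt A # v" and b: "\<beta> = u @ rhs @ v"
    unfolding step_def by blast
  from \<open>gen \<beta> w\<close> b obtain w1 w2 w3 where "w = w1 @ w2 @ w3" "gen u w1" "gen rhs w2" "gen v w3"
    by (auto simp: gen_append)
  with gen_rule[OF r] show ?thesis unfolding a by (auto simp: gen_append) blast
qed

lemma steps_gen: "step\<^sup>*\<^sup>* \<alpha> \<beta> \<Longrightarrow> gen \<beta> w \<Longrightarrow> gen \<alpha> w"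
  by (induction rule: rtranclp_induct) (auto intro: gen_step)

lemma step_ctx: "step \<alpha> \<beta> \<Longrightarrow> step (x @ \<alpha> @ y) (x @ \<beta> @ y)"
  unfolding step_def by (metis append.assoc append_Cons)

lemma steps_ctx: "step\<^sup>*\<^sup>* \<alpha> \<beta> \<Longrightarrow> step\<^sup>*\<^sup>* (x @ \<alpha> @ y) (x @ \<beta> @ y)"
  by (induction rule: rtranclp_induct) (auto intro: step_ctx rtranclp.rtrancl_into_rtrancl)

lemma step_rule: "(A, rhs) \<in> rules \<Longrightarrow> step [Nt A] rhs"
  unfolding step_def by (metis append.right_neutral append_Nil)

lemma L_steps: "L A w \<Longrightarrow> step\<^sup>*\<^sup>* [Nt A] (map Tm w)"
proof (induction rule: L.induct)
  case L1 then show ?case using step_rule[of S "[Tm Dot]"] by (auto simp: rules_def)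
next
  case (L2 u)
  have "step [Nt S] [Nt S, Tm Dot]" by (rule step_rule) (auto simp: rules_def)
  moreover have "step\<^sup>*\<^sup>* ([] @ [Nt S] @ [Tm Dot]) ([] @ map Tm u @ [Tm Dot])" by (rule steps_ctx[OF L2.IH])
  ultimately show ?case by simp
next
  case (L3 v)
  have "step [Nt S] [Tm Op, Nt R, Tm Cl]" by (rule step_rule) (auto simp: rules_def)
  moreover have "step\<^sup>*\<^sup>* ([Tm Op] @ [Nt R] @ [Tm Cl]) ([Tm Op] @ map Tm v @ [Tm Cl])" by (rule steps_ctx[OF L3.IH])
  ultimately show ?case by simp
next
  case (L4 u v)
  have "step [Nt S] [Nt S, Tm Op, Nt R, Tm Cl]" by (rule step_rule) (auto simp: rules_def)
  moreover have "step\<^sup>*\<^sup>* ([] @ [Nt S] @ [Tm Op, Nt R, Tm Cl]) ([] @ map Tm u @ [Tm Op, Nt R, Tm Cl])" by (rule steps_ctx[OF L4.IH(1)])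
  moreover have "step\<^sup>*\<^sup>* ((map Tm u @ [Tm Op]) @ [Nt R] @ [Tm Cl]) ((map Tm u @ [Tm Op]) @ map Tm v @ [Tm Cl])" by (rule steps_ctx[OF L4.IH(2)])
  ultimately show ?case by simp
next
  case L5 then show ?case using step_rule[of R "[Tm Op, Tm Dot, Tm Cl]"] by (auto simp: rules_def)
next
  case (L6 v)
  have "step [Nt R] [Tm Op, Nt R, Tm Cl]" by (rule step_rule) (auto simp: rules_def)
  moreover have "step\<^sup>*\<^sup>* ([Tm Op] @ [Nt R] @ [Tm Cl]) ([Tm Op] @ map Tm v @ [Tm Cl])" by (rule steps_ctx[OF L6.IH])
  ultimately show ?case by simp
next
  case (L7 u v)
  have "step [Nt R] [Tm Op, Nt S, Tm Op, Nt R, Tm Cl, Tm Cl]" by (rule step_rule) (auto simp: rules_def)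
  moreover have "step\<^sup>*\<^sup>* ([Tm Op] @ [Nt S] @ [Tm Op, Nt R, Tm Cl, Tm Cl]) ([Tm Op] @ map Tm u @ [Tm Op, Nt R, Tm Cl, Tm Cl])" by (rule steps_ctx[OF L7.IH(1)])
  moreover have "step\<^sup>*\<^sup>* ((Tm Op # map Tm u @ [Tm Op]) @ [Nt R] @ [Tm Cl, Tm Cl]) ((Tm Op # map Tm u @ [Tm Op]) @ map Tm v @ [Tm Cl, Tm Cl])" by (rule steps_ctx[OF L7.IH(2)])
  ultimately show ?case by simp
next
  case (L8 u)
  have "step [Nt R] [Tm Op, Nt S, Tm Dot, Tm Cl]" by (rule step_rule) (auto simp: rules_def)
  moreover have "step\<^sup>*\<^sup>* ([Tm Op] @ [Nt S] @ [Tm Dot, Tm Cl]) ([Tm Op] @ map Tm u @ [Tm Dot, Tm Cl])" by (rule steps_ctx[OF L8.IH])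
  ultimately show ?case by simp
qed

lemma lang_L: "lang A = {w. L A w}"
proof -
  have "step\<^sup>*\<^sup>* [Nt A] (map Tm w) \<longleftrightarrow> L A w" for w
  proof
    assume "step\<^sup>*\<^sup>* [Nt A] (map Tm w)"
    from steps_gen[OF this] have "gen [Nt A] w" by (simp add: gen_map_Tm)
    then show "L A w" by auto
  qed (rule L_steps)
  then show ?thesis unfolding lang_def by auto
qed




datatype tr = D | N "tr list"

fun wdt :: "tr \<Rightarrow> sym list" and wdf :: "tr list \<Rightarrow> sym list" where
  "wdt D = [Dot]"
| "wdt (N ts) = Op # wdf ts @ [Cl]"
| "wdf [] = []"
| "wdf (t # ts) = wdt t @ wdf ts"

fun cft :: "bool \<Rightarrow> tr \<Rightarrow> bool" and cfp :: "bool \<Rightarrow> tr list \<Rightarrow> bool" where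
  "cft p D = True"
| "cft p (N ts) = (ts \<noteq> [] \<and> (p \<or> (\<exists>x. ts = [N x])) \<and> cfp True ts)"
| "cfp q [] = True"
| "cfp q [t] = cft q t"
| "cfp q (t # u # ts) = (cft False t \<and> cfp False (u # ts))"

fun okt :: "tr \<Rightarrow> bool" and okl :: "tr list \<Rightarrow> bool" where
  "okt D = True"
| "okt (N ts) = (ts \<noteq> [] \<and> okl ts)"
| "okl [] = True"
| "okl (t # ts) = (okt t \<and> okl ts)"

lemma wdf_append[simp]: "wdf (f @ g) = wdf f @ wdf g"
  by (induction f) auto

lemma wdt_ne[simp]: "wdt t \<noteq> []"
  by (cases t) auto

lemma wdf_Nil_iff[simp]: "wdf f = [] \<longleftrightarrow> f = []"
  by (cases f) auto

lemma len_wdt: "length (wdt t) > 0"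
  by (cases t) auto

lemma len_snoc: "length (wdf f) < length (wdf (f @ [t]))"
  by (cases t) auto

lemma cfp_False: "cfp False f \<longleftrightarrow> (\<forall>t\<in>set f. cft False t)"
  by (induction f rule: induct_list012) auto

lemma cfp_snoc: "f \<noteq> [] \<Longrightarrow> cfp q (f @ [y]) = cfp False (f @ [y])"
  by (cases f; cases "tl f") auto

lemma cf_ok: "cft q t \<Longrightarrow> okt t" "cfp q f \<Longrightarrow> okl f"
proof (induction q t and q f rule: cft_cfp.induct)
qed auto

lemma L_forest: "L A w \<Longrightarrow>
   (A = S \<longrightarrow> (\<exists>f. f \<noteq> [] \<and> cfp False f \<and> wdf f = w)) \<and>
   (A = R \<longrightarrow> (\<exists>x. x \<noteq> [] \<and> cfp True x \<and> w = Op # wdf x @ [Cl]))"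
proof (induction rule: L.induct)
  case L1 then show ?case by (intro conjI impI exI[of _ "[D]"]) auto
next
  case (L2 u)
  then obtain f where "f \<noteq> []" "cfp False f" "wdf f = u" by auto
  then show ?case by (intro conjI impI exI[of _ "f @ [D]"]) (auto simp: cfp_False)
next
  case (L3 v)
  then obtain x where "x \<noteq> []" "cfp True x" "v = Op # wdf x @ [Cl]" by auto
  then show ?case by (intro conjI impI exI[of _ "[N [N x]]"]) auto
next
  case (L4 u v)
  then obtain f where "f \<noteq> []" "cfp False f" "wdf f = u" by auto
  moreover from L4 obtain x where "x \<noteq> []" "cfp True x" "v = Op # wdf x @ [Cl]" by auto
  ultimately show ?case by (intro conjI impI exI[of _ "f @ [N [N x]]"]) (auto simp: cfp_False)
next
  case L5 then show ?case by (intro conjI impI exI[of _ "[D]"]) auto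
next
  case (L6 v)
  then obtain x where "x \<noteq> []" "cfp True x" "v = Op # wdf x @ [Cl]" by auto
  then show ?case by (intro conjI impI exI[of _ "[N x]"]) auto
next
  case (L7 u v)
  then obtain f where f: "f \<noteq> []" "cfp False f" "wdf f = u" by auto
  moreover from L7 obtain x where "x \<noteq> []" "cfp True x" "v = Op # wdf x @ [Cl]" by auto
  ultimately show ?case by (intro conjI impI exI[of _ "f @ [N [N x]]"]) (auto simp: cfp_snoc[OF f(1), of True] cfp_False)
next
  case (L8 u)
  then obtain f where f: "f \<noteq> []" "cfp False f" "wdf f = u" by auto
  then show ?case by (intro conjI impI exI[of _ "f @ [D]"]) (auto simp: cfp_snoc[OF f(1), of True] cfp_False)
qed

lemma forest_L_aux: "(\<forall>f. length (wdf f) = n \<longrightarrow> f \<noteq> [] \<longrightarrow> cfp False f \<longrightarrow> L S (wdf f)) \<and>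
    (\<forall>x. length (wdf x) = n \<longrightarrow> x \<noteq> [] \<longrightarrow> cfp True x \<longrightarrow> L R (Op # wdf x @ [Cl]))"
proof (induction n rule: less_induct)
  case (less n)
  have IS: "L S (wdf f)" if "length (wdf f) < n" "f \<noteq> []" "cfp False f" for f
    using less that by blast
  have IR: "L R (Op # wdf x @ [Cl])" if "length (wdf x) < n" "x \<noteq> []" "cfp True x" for x
    using less that by blast
  show ?case
  proof (intro conjI allI impI)
    fix f assume n: "length (wdf f) = n" and ne: "f \<noteq> []" and c: "cfp False f"
    then obtain f' t where ft: "f = f' @ [t]" by (metis rev_exhaust)
    show "L S (wdf f)"
    proof (cases "f' = []")
      case True
      show ?thesis
      proof (cases t)
        case D then show ?thesis using ft True by (simp add: L1)
      next
        case (N ts)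
        with c ft True obtain x where x: "ts = [N x]" "x \<noteq> []" "cfp True x" by auto
        have "L R (Op # wdf x @ [Cl])" using IR[OF _ x(2,3)] n ft N x by simp
        from L3[OF this] show ?thesis using ft True N x by simp
      qed
    next
      case False
      have cf': "cfp False f'" "cft False t" using c ft by (auto simp: cfp_False)
      have S': "L S (wdf f')" using IS[OF _ False cf'(1)] n ft len_snoc[of f' t] by simp
      show ?thesis
      proof (cases t)
        case D then show ?thesis using ft L2[OF S'] by simp
      next
        case (N ts)
        with cf' obtain x where x: "ts = [N x]" "x \<noteq> []" "cfp True x" by auto
        have "L R (Op # wdf x @ [Cl])" using IR[OF _ x(2,3)] n ft N x by simp
        from L4[OF S' this] show ?thesis using ft N x by simp
      qed
    qed
  next
    fix f assume n: "length (wdf f) = n" and ne: "f \<noteq> []" and c: "cfp True f"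
    then obtain f' t where ft: "f = f' @ [t]" by (metis rev_exhaust)
    show "L R (Op # wdf f @ [Cl])"
    proof (cases "f' = []")
      case True
      show ?thesis
      proof (cases t)
        case D then show ?thesis using ft True by (simp add: L5)
      next
        case (N ts)
        with c ft True have x: "ts \<noteq> []" "cfp True ts" by auto
        have "L R (Op # wdf ts @ [Cl])" using IR[OF _ x] n ft N by simp
        from L6[OF this] show ?thesis using ft True N by simp
      qed
    next
      case False
      have cf': "cfp False f'" "cft False t" using c ft cfp_snoc[OF False, of True] by (auto simp: cfp_False)
      have S': "L S (wdf f')" using IS[OF _ False cf'(1)] n ft len_snoc[of f' t] by simp
      show ?thesis
      proof (cases t)
        case D then show ?thesis using ft L8[OF S'] by simp
      next
        case (N ts)
        with cf' obtain x where x: "ts = [N x]" "x \<noteq> []" "cfp True x" by auto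
        have "L R (Op # wdf x @ [Cl])" using IR[OF _ x(2,3)] n ft N x by simp
        from L7[OF S' this] show ?thesis using ft N x by simp
      qed
    qed
  qed
qed

lemma L_S_iff: "L S w \<longleftrightarrow> (\<exists>f. f \<noteq> [] \<and> cfp False f \<and> wdf f = w)"
  using L_forest[of S w] forest_L_aux by blast

lemma L_R_iff: "L R w \<longleftrightarrow> (\<exists>x. x \<noteq> [] \<and> cfp True x \<and> w = Op # wdf x @ [Cl])"
  using L_forest[of R w] forest_L_aux by blast

section \<open>Heights\<close>

fun ht :: "sym list \<Rightarrow> int" where
  "ht [] = 0"
| "ht (Op # w) = ht w + 1"
| "ht (Cl # w) = ht w - 1"
| "ht (Dot # w) = ht w"

lemma ht_append[simp]: "ht (u @ v) = ht u + ht v"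
  by (induction u rule: ht.induct) auto

definition bal :: "sym list \<Rightarrow> bool" where
  "bal w \<longleftrightarrow> ht w = 0 \<and> (\<forall>u v. w = u @ v \<longrightarrow> ht u \<ge> 0)"

lemma bal_forest: "ht (wdt t) = 0 \<and> (\<forall>u v. wdt t = u @ v \<longrightarrow> ht u \<ge> 0)"
   "ht (wdf f) = 0 \<and> (\<forall>u v. wdf f = u @ v \<longrightarrow> ht u \<ge> 0)"
proof (induction t and f rule: wdt_wdf.induct)
  case 1 then show ?case by (auto simp: Cons_eq_append_conv)
next
  case (2 ts)
  note IH = this
  show ?case
  proof (intro conjI allI impI)
    show "ht (wdt (N ts)) = 0" using IH by simp
    fix u v assume "wdt (N ts) = u @ v"
    then have "Op # wdf ts @ [Cl] = u @ v" by simp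
    then consider "u = []" | u' where "u = Op # u'" "wdf ts @ [Cl] = u' @ v"
      by (auto simp: Cons_eq_append_conv)
    then show "ht u \<ge> 0"
    proof cases
      case (2 u')
      note U = this
      from U(2) consider w where "wdf ts = u' @ w" | w where "u' = wdf ts @ w" "w @ v = [Cl]"
        by (auto simp: append_eq_append_conv2)
      then show ?thesis
      proof cases
        case 1 then have "ht u' \<ge> 0" using IH by blast
        then show ?thesis using U by simp
      next
        case (2 w) then have "w = [] \<or> w = [Cl]" by (auto simp: append_eq_Cons_conv)
        then show ?thesis using 2 U IH by auto
      qed
    qed simp
  qed
next
  case 3 then show ?case by simp
next
  case (4 t ts)
  show ?case
  proof (intro conjI allI impI)
    show "ht (wdf (t # ts)) = 0" using 4 by simp
    fix u v assume "wdf (t # ts) = u @ v"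
    then have "wdt t @ wdf ts = u @ v" by simp
    then consider w where "wdt t = u @ w" | w where "u = wdt t @ w" "wdf ts = w @ v"
      by (auto simp: append_eq_append_conv2)
    then show "ht u \<ge> 0"
    proof cases
      case 1 then show ?thesis using 4 by blast
    next
      case 2 then show ?thesis using 4 by auto
    qed
  qed
qed

lemma bal_wdf: "bal (wdf f)"
  using bal_forest(2) unfolding bal_def by blast




definition ssi :: "nat \<Rightarrow> nat \<Rightarrow> (nat \<times> nat) set \<Rightarrow> bool" where
  "ssi a b P \<longleftrightarrow>
     (\<forall>(i,j)\<in>P. a \<le> i \<and> i < j \<and> j < b \<and> j - i > 1) \<and>
     (\<forall>(i,j)\<in>P. \<forall>(k,l)\<in>P. \<not> (i < k \<and> k < j \<and> j < l)) \<and>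
     (\<forall>(i,j)\<in>P. \<forall>(k,l)\<in>P. (i,j) \<noteq> (k,l) \<longrightarrow> {i,j} \<inter> {k,l} = {})"

definition ch :: "(nat \<times> nat) set \<Rightarrow> nat \<Rightarrow> sym" where
  "ch P k = (if \<exists>j. (k,j) \<in> P then Op else if \<exists>i. (i,k) \<in> P then Cl else Dot)"

definition canon_rel :: "bool \<Rightarrow> nat \<Rightarrow> nat \<Rightarrow> (nat \<times> nat) set \<Rightarrow> bool" where
  "canon_rel p a b P \<longleftrightarrow> (\<forall>(i,l)\<in>P. (p \<and> i = a \<and> l + 1 = b) \<or> (i-1, l+1) \<in> P \<or> (i+1, l-1) \<in> P)"

lemma sec_struct_ssi: "sec_struct n P \<longleftrightarrow> ssi 1 (n+1) P"
  unfolding sec_struct_def ssi_def by (auto simp: less_Suc_eq_le)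

lemma dotbracket_ch: "dotbracket n P = map (ch P) [1..<n+1]"
  unfolding dotbracket_def ch_def by simp

lemma canonical_rel: "canonical P \<longleftrightarrow> canon_rel False a b P"
  unfolding canonical_def canon_rel_def by auto

fun pt :: "nat \<Rightarrow> tr \<Rightarrow> (nat \<times> nat) set" and pl :: "nat \<Rightarrow> tr list \<Rightarrow> (nat \<times> nat) set" where
  "pt a D = {}"
| "pt a (N ts) = insert (a, a + length (wdf ts) + 1) (pl (a+1) ts)"
| "pl a [] = {}"
| "pl a (t # ts) = pt a t \<union> pl (a + length (wdt t)) ts"

lemma ssi_empty: "ssi a b {}"
  unfolding ssi_def by auto

lemma ssi_alt: "ssi a b P \<longleftrightarrow>
     (\<forall>i j. (i,j)\<in>P \<longrightarrow> a \<le> i \<and> i < j \<and> j < b \<and> i + 1 < j) \<and>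
     (\<forall>i j k l. (i,j)\<in>P \<longrightarrow> (k,l)\<in>P \<longrightarrow> \<not> (i < k \<and> k < j \<and> j < l)) \<and>
     (\<forall>i j k l. (i,j)\<in>P \<longrightarrow> (k,l)\<in>P \<longrightarrow> (i,j) \<noteq> (k,l) \<longrightarrow> i \<noteq> k \<and> i \<noteq> l \<and> j \<noteq> k \<and> j \<noteq> l)"
proof -
  have q: "(j - i > (1::nat)) = (i + 1 < j)" for i j by auto
  have e1: "(\<forall>(i,j)\<in>P. a \<le> i \<and> i < j \<and> j < b \<and> j - i > 1) \<longleftrightarrow> (\<forall>i j. (i,j)\<in>P \<longrightarrow> a \<le> i \<and> i < j \<and> j < b \<and> i + 1 < j)"
    using q by auto
  have e2: "(\<forall>(i,j)\<in>P. \<forall>(k,l)\<in>P. \<not> (i < k \<and> k < j \<and> j < l)) \<longleftrightarrow> (\<forall>i j k l. (i,j)\<in>P \<longrightarrow> (k,l)\<in>P \<longrightarrow> \<not> (i < k \<and> k < j \<and> j < l))"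
    by blast
  have d: "{i,j} \<inter> {k,l} = {} \<longleftrightarrow> i \<noteq> k \<and> i \<noteq> l \<and> j \<noteq> k \<and> j \<noteq> l" for i j k l :: nat
    by auto
  have e3: "(\<forall>(i,j)\<in>P. \<forall>(k,l)\<in>P. (i,j) \<noteq> (k,l) \<longrightarrow> {i,j} \<inter> {k,l} = {}) \<longleftrightarrow> (\<forall>i j k l. (i,j)\<in>P \<longrightarrow> (k,l)\<in>P \<longrightarrow> (i,j) \<noteq> (k,l) \<longrightarrow> i \<noteq> k \<and> i \<noteq> l \<and> j \<noteq> k \<and> j \<noteq> l)"
    unfolding d by blast
  show ?thesis unfolding ssi_def e1 e2 e3 ..
qed

lemma ssi_union: assumes "ssi a m P" "ssi m b Q" "a \<le> m" "m \<le> b" shows "ssi a b (P \<union> Q)"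
proof -
  have bP: "\<And>i j. (i,j) \<in> P \<Longrightarrow> a \<le> i \<and> i < j \<and> j < m \<and> i + 1 < j" using assms(1) unfolding ssi_alt by blast
  have bQ: "\<And>i j. (i,j) \<in> Q \<Longrightarrow> m \<le> i \<and> i < j \<and> j < b \<and> i + 1 < j" using assms(2) unfolding ssi_alt by blast
  have nP: "\<And>i j k l. (i,j) \<in> P \<Longrightarrow> (k,l) \<in> P \<Longrightarrow> \<not> (i < k \<and> k < j \<and> j < l)" using assms(1) unfolding ssi_alt by blast
  have nQ: "\<And>i j k l. (i,j) \<in> Q \<Longrightarrow> (k,l) \<in> Q \<Longrightarrow> \<not> (i < k \<and> k < j \<and> j < l)" using assms(2) unfolding ssi_alt by blast
  have dP: "\<And>i j k l. (i,j) \<in> P \<Longrightarrow> (k,l) \<in> P \<Longrightarrow> (i,j) \<noteq> (k,l) \<Longrightarrow> i \<noteq> k \<and> i \<noteq> l \<and> j \<noteq> k \<and> j \<noteq> l" using assms(1) unfolding ssi_alt by blast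
  have dQ: "\<And>i j k l. (i,j) \<in> Q \<Longrightarrow> (k,l) \<in> Q \<Longrightarrow> (i,j) \<noteq> (k,l) \<Longrightarrow> i \<noteq> k \<and> i \<noteq> l \<and> j \<noteq> k \<and> j \<noteq> l" using assms(2) unfolding ssi_alt by blast
  have 1: "a \<le> i \<and> i < j \<and> j < b \<and> i + 1 < j" if "(i,j) \<in> P \<union> Q" for i j
    using that bP[of i j] bQ[of i j] assms(3,4) by auto
  have 2: "\<not> (i < k \<and> k < j \<and> j < l)" if "(i,j) \<in> P \<union> Q" "(k,l) \<in> P \<union> Q" for i j k l
    using that bP[of i j] bQ[of i j] bP[of k l] bQ[of k l] nP[of i j k l] nQ[of i j k l] by auto
  have 3: "i \<noteq> k \<and> i \<noteq> l \<and> j \<noteq> k \<and> j \<noteq> l" if "(i,j) \<in> P \<union> Q" "(k,l) \<in> P \<union> Q" "(i,j) \<noteq> (k,l)" for i j k l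
    using that bP[of i j] bQ[of i j] bP[of k l] bQ[of k l] dP[of i j k l] dQ[of i j k l] by auto
  show ?thesis unfolding ssi_alt using 1 2 3 by blast
qed

lemma ssi_insert: assumes "ssi (a+1) e P" "a + 1 < e" shows "ssi a (e+1) (insert (a,e) P)"
proof -
  have bP: "\<And>i j. (i,j) \<in> P \<Longrightarrow> a+1 \<le> i \<and> i < j \<and> j < e \<and> i + 1 < j" using assms(1) unfolding ssi_alt by blast
  have nP: "\<And>i j k l. (i,j) \<in> P \<Longrightarrow> (k,l) \<in> P \<Longrightarrow> \<not> (i < k \<and> k < j \<and> j < l)" using assms(1) unfolding ssi_alt by blast
  have dP: "\<And>i j k l. (i,j) \<in> P \<Longrightarrow> (k,l) \<in> P \<Longrightarrow> (i,j) \<noteq> (k,l) \<Longrightarrow> i \<noteq> k \<and> i \<noteq> l \<and> j \<noteq> k \<and> j \<noteq> l" using assms(1) unfolding ssi_alt by blast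
  have 1: "a \<le> i \<and> i < j \<and> j < e+1 \<and> i + 1 < j" if "(i,j) \<in> insert (a,e) P" for i j
    using that bP[of i j] assms(2) by auto
  have 2: "\<not> (i < k \<and> k < j \<and> j < l)" if "(i,j) \<in> insert (a,e) P" "(k,l) \<in> insert (a,e) P" for i j k l
    using that bP[of i j] bP[of k l] nP[of i j k l] by auto
  have 3: "i \<noteq> k \<and> i \<noteq> l \<and> j \<noteq> k \<and> j \<noteq> l" if "(i,j) \<in> insert (a,e) P" "(k,l) \<in> insert (a,e) P" "(i,j) \<noteq> (k,l)" for i j k l
    using that bP[of i j] bP[of k l] dP[of i j k l] by auto
  show ?thesis unfolding ssi_alt using 1 2 3 by blast
qed

lemma ch_out: "(\<forall>(i,j)\<in>Q. i \<noteq> k \<and> j \<noteq> k) \<Longrightarrow> ch (P \<union> Q) k = ch P k"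
  unfolding ch_def by fastforce

lemma ch_out2: "(\<forall>(i,j)\<in>Q. i \<noteq> k \<and> j \<noteq> k) \<Longrightarrow> ch (Q \<union> P) k = ch P k"
  unfolding ch_def by fastforce

lemma canon_rel_union: "canon_rel False a m P \<Longrightarrow> canon_rel False m' b Q \<Longrightarrow> canon_rel q a' b' (P \<union> Q)"
  unfolding canon_rel_def by fastforce


lemma upt_wrap: "[a..<a + n + 2] = a # [a+1..<a+n+1] @ [a+n+1]"
  by (simp add: upt_conv_Cons)

lemma F1: "okt t \<Longrightarrow> ssi a (a + length (wdt t)) (pt a t) \<and> map (ch (pt a t)) [a..<a + length (wdt t)] = wdt t
     \<and> (\<forall>p. cft p t \<longrightarrow> canon_rel p a (a + length (wdt t)) (pt a t))"
  "okl f \<Longrightarrow> ssi a (a + length (wdf f)) (pl a f) \<and> map (ch (pl a f)) [a..<a + length (wdf f)] = wdf f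
     \<and> (\<forall>p. cfp p f \<longrightarrow> canon_rel p a (a + length (wdf f)) (pl a f))"
proof (induction t and f arbitrary: a and a rule: wdt_wdf.induct)
  case 1 then show ?case by (simp add: ssi_empty ch_def canon_rel_def)
next
  case (2 ts a)
  let ?e = "a + length (wdf ts) + 1"
  let ?P = "pl (a+1) ts"
  from 2 have ok: "ts \<noteq> []" "okl ts" by auto
  have IH: "ssi (a+1) ?e ?P" "map (ch ?P) [a+1..<?e] = wdf ts"
     "\<And>p. cfp p ts \<Longrightarrow> canon_rel p (a+1) ?e ?P"
    using 2(1)[OF ok(2), of "a+1"] by auto
  have len: "a + 1 < ?e" using ok(1) by simp
  have bnd: "\<forall>(i,j)\<in>?P. a < i \<and> i < j \<and> j < ?e" using IH(1) unfolding ssi_def by auto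
  have s: "ssi a (?e+1) (insert (a,?e) ?P)" by (rule ssi_insert[OF IH(1) len])
  have ups: "[a..<a + length (wdt (N ts))] = a # [a+1..<?e] @ [?e]"
    using upt_wrap[of a "length (wdf ts)"] by simp
  have chm: "map (ch (insert (a,?e) ?P)) [a+1..<?e] = map (ch ?P) [a+1..<?e]"
  proof (rule map_cong[OF refl])
    fix k assume "k \<in> set [a+1..<?e]"
    then have "k \<noteq> a" "k \<noteq> ?e" by auto
    then show "ch (insert (a,?e) ?P) k = ch ?P k" using ch_out2[of "{(a,?e)}" k ?P] by auto
  qed
  have cha: "ch (insert (a,?e) ?P) a = Op" by (auto simp: ch_def)
  have ne: "\<not>(\<exists>j. (?e,j) \<in> ?P)" using bnd by fastforce
  have che: "ch (insert (a,?e) ?P) ?e = Cl" using ne by (auto simp: ch_def)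
  have can: "canon_rel p a (a + length (wdt (N ts))) (pt a (N ts))" if c: "cft p (N ts)" for p
  proof -
    from c have c1: "p \<or> (\<exists>x. ts = [N x])" and c2: "cfp True ts" by auto
    have cr: "canon_rel True (a+1) ?e ?P" by (rule IH(3)[OF c2])
    have root: "(p \<and> a = a \<and> ?e + 1 = ?e + 1) \<or> (a+1, ?e-1) \<in> ?P"
    proof (cases p)
      case False
      with c1 obtain x where x: "ts = [N x]" by auto
      then show ?thesis by simp
    qed simp
    show ?thesis unfolding canon_rel_def
    proof (intro ballI)
      fix z assume "z \<in> pt a (N ts)"
      then consider "z = (a, ?e)" | "z \<in> ?P" by auto
      then show "case z of (i, l) \<Rightarrow> p \<and> i = a \<and> l + 1 = a + length (wdt (N ts)) \<or> (i - 1, l + 1) \<in> pt a (N ts) \<or> (i + 1, l - 1) \<in> pt a (N ts)"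
      proof cases
        case 1 then show ?thesis using root by auto
      next
        case 2
        obtain i l where z: "z = (i,l)" by (cases z)
        with 2 cr have "(i = a+1 \<and> l + 1 = ?e) \<or> (i-1, l+1) \<in> ?P \<or> (i+1, l-1) \<in> ?P"
          unfolding canon_rel_def by auto
        then show ?thesis using z by auto
      qed
    qed
  qed
  have Q: "pt a (N ts) = insert (a,?e) ?P" by simp
  have L: "a + length (wdt (N ts)) = ?e + 1" by simp
  have "map (ch (insert (a,?e) ?P)) (a # [a+1..<?e] @ [?e]) = ch (insert (a,?e) ?P) a # map (ch (insert (a,?e) ?P)) [a+1..<?e] @ [ch (insert (a,?e) ?P) ?e]"
    by (simp only: list.map map_append)
  also have "\<dots> = Op # wdf ts @ [Cl]" by (simp only: cha che chm IH(2))
  finally have mp: "map (ch (pt a (N ts))) [a..<a + length (wdt (N ts))] = wdt (N ts)"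
    unfolding Q ups by simp
  show ?case
    using s mp can unfolding L[symmetric] Q[symmetric] by blast
next
  case 3 then show ?case by (simp add: ssi_empty canon_rel_def)
next
  case (4 t ts a)
  let ?m = "a + length (wdt t)"
  let ?b = "?m + length (wdf ts)"
  from 4 have ok: "okt t" "okl ts" by auto
  have IT: "ssi a ?m (pt a t)" "map (ch (pt a t)) [a..<?m] = wdt t"
     "\<And>p. cft p t \<Longrightarrow> canon_rel p a ?m (pt a t)"
    using 4(1)[OF ok(1), of a] by auto
  have IL: "ssi ?m ?b (pl ?m ts)" "map (ch (pl ?m ts)) [?m..<?b] = wdf ts"
     "\<And>p. cfp p ts \<Longrightarrow> canon_rel p ?m ?b (pl ?m ts)"
    using 4(2)[OF ok(2), of ?m] by auto
  have bT: "\<forall>(i,j)\<in>pt a t. i < ?m \<and> j < ?m" using IT(1) unfolding ssi_def by auto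
  have bL: "\<forall>(i,j)\<in>pl ?m ts. ?m \<le> i \<and> ?m \<le> j" using IL(1) unfolding ssi_def by auto
  have s: "ssi a ?b (pl a (t # ts))" using ssi_union[OF IT(1) IL(1)] by simp
  have ups: "[a..<?b] = [a..<?m] @ [?m..<?b]"
    by (metis le_add1 upt_add_eq_append)
  have m1: "map (ch (pl a (t # ts))) [a..<?m] = map (ch (pt a t)) [a..<?m]"
  proof (rule map_cong[OF refl])
    fix k assume "k \<in> set [a..<?m]"
    then have "k < ?m" by auto
    then show "ch (pl a (t # ts)) k = ch (pt a t) k" using bL ch_out[of "pl ?m ts" k "pt a t"] by fastforce
  qed
  have m2: "map (ch (pl a (t # ts))) [?m..<?b] = map (ch (pl ?m ts)) [?m..<?b]"
  proof (rule map_cong[OF refl])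
    fix k assume "k \<in> set [?m..<?b]"
    then have "?m \<le> k" by auto
    then show "ch (pl a (t # ts)) k = ch (pl ?m ts) k" using bT ch_out2[of "pt a t" k "pl ?m ts"] by fastforce
  qed
  have can: "canon_rel p a ?b (pl a (t # ts))" if c: "cfp p (t # ts)" for p
  proof (cases ts)
    case Nil
    then show ?thesis using IT(3)[of p] c by simp
  next
    case (Cons u us)
    then have "cft False t" "cfp False ts" using c by auto
    from canon_rel_union[OF IT(3)[OF this(1)] IL(3)[OF this(2)]] show ?thesis by simp
  qed
  have mp: "map (ch (pl a (t # ts))) [a..<?b] = wdf (t # ts)"
    unfolding ups map_append m1 m2 IT(2) IL(2) by simp
  have L: "a + length (wdf (t # ts)) = ?b" by simp
  show ?case unfolding L using s mp can by blast
qed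




lemma cfp_cons: "cfp p (t # f) = (if f = [] then cft p t else cft False t \<and> cfp False f)"
  by (cases f) auto

lemma ssiI: "(\<And>i j. (i,j)\<in>P \<Longrightarrow> a \<le> i \<and> i < j \<and> j < b \<and> i + 1 < j) \<Longrightarrow>
  (\<And>i j k l. (i,j)\<in>P \<Longrightarrow> (k,l)\<in>P \<Longrightarrow> \<not> (i < k \<and> k < j \<and> j < l)) \<Longrightarrow>
  (\<And>i j k l. (i,j)\<in>P \<Longrightarrow> (k,l)\<in>P \<Longrightarrow> (i,j) \<noteq> (k,l) \<Longrightarrow> i \<noteq> k \<and> i \<noteq> l \<and> j \<noteq> k \<and> j \<noteq> l) \<Longrightarrow> ssi a b P"
  unfolding ssi_alt by blast

lemma upt_split3: "a < j \<Longrightarrow> j < b \<Longrightarrow> [a..<b] = a # [a+1..<j] @ j # [j+1..<b]"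
proof -
  assume "a < j" "j < b"
  have "[a..<b] = [a..<j] @ [j..<b]" using upt_add_eq_append[of a j "b - j"] \<open>a < j\<close> \<open>j < b\<close> by simp
  also have "[a..<j] = a # [a+1..<j]" using \<open>a < j\<close> upt_conv_Cons by simp
  also have "[j..<b] = j # [j+1..<b]" using \<open>j < b\<close> upt_conv_Cons by simp
  finally show ?thesis by simp
qed

lemma F2: "ssi a b P \<Longrightarrow> \<exists>f. okl f \<and> wdf f = map (ch P) [a..<b] \<and> ((a, b-1) \<in> P \<longrightarrow> (\<exists>x. f = [N x]))
     \<and> (\<forall>p. canon_rel p a b P \<longrightarrow> cfp p f)"
proof (induction "b - a" arbitrary: a b P rule: less_induct)
  case less
  note ss = less.prems
  have bP: "\<And>i j. (i,j) \<in> P \<Longrightarrow> a \<le> i \<and> i < j \<and> j < b \<and> i + 1 < j" using ss unfolding ssi_alt by blast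
  have nP: "\<And>i j k l. (i,j) \<in> P \<Longrightarrow> (k,l) \<in> P \<Longrightarrow> \<not> (i < k \<and> k < j \<and> j < l)" using ss unfolding ssi_alt by blast
  have dP: "\<And>i j k l. (i,j) \<in> P \<Longrightarrow> (k,l) \<in> P \<Longrightarrow> (i,j) \<noteq> (k,l) \<Longrightarrow> i \<noteq> k \<and> i \<noteq> l \<and> j \<noteq> k \<and> j \<noteq> l" using ss unfolding ssi_alt by blast
  have "b \<le> a \<or> (a < b \<and> (\<forall>j. (a,j) \<notin> P)) \<or> (\<exists>j. (a,j) \<in> P)" by auto
  then consider (E) "b \<le> a" | (Dt) "a < b" "\<forall>j. (a,j) \<notin> P" | (Pr) j where "(a,j) \<in> P" by blast
  then show ?case
  proof cases
    case E
    have "P = {}"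
    proof (rule equals0I)
      fix z assume "z \<in> P"
      moreover obtain i l where "z = (i,l)" by (cases z)
      ultimately show False using bP[of i l] E by auto
    qed
    then show ?thesis using E by (intro exI[of _ "[]"]) (auto simp: canon_rel_def)
  next
    case Dt
    have ss': "ssi (a+1) b P"
    proof (rule ssiI)
      fix i j assume "(i,j) \<in> P"
      then show "a + 1 \<le> i \<and> i < j \<and> j < b \<and> i + 1 < j" using bP[of i j] Dt(2) by (cases "i = a") auto
    qed (fact nP dP)+
    obtain f' where f': "okl f'" "wdf f' = map (ch P) [a+1..<b]" "\<And>p. canon_rel p (a+1) b P \<Longrightarrow> cfp p f'"
    proof -
      have lt: "b - (a+1) < b - a" using Dt(1) by simp
      from less.hyps[of b "a+1" P, OF lt ss'] show ?thesis using that by blast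
    qed
    have "\<not> (\<exists>i. (i,a) \<in> P)"
    proof
      assume "\<exists>i. (i,a) \<in> P"
      then obtain i where "(i,a) \<in> P" by blast
      then show False using bP[of i a] by auto
    qed
    then have cha: "ch P a = Dot" using Dt(2) unfolding ch_def by auto
    have ups: "[a..<b] = a # [a+1..<b]" using Dt(1) upt_conv_Cons by simp
    have nab: "(a, b-1) \<notin> P" using Dt(2) by blast
    have can: "cfp p (D # f')" if "canon_rel p a b P" for p
    proof -
      have "canon_rel False (a+1) b P" unfolding canon_rel_def
      proof (intro ballI)
        fix z assume z: "z \<in> P"
        obtain i l where zi: "z = (i,l)" by (cases z)
        have "(p \<and> i = a \<and> l + 1 = b) \<or> (i-1, l+1) \<in> P \<or> (i+1, l-1) \<in> P"
          using that z zi unfolding canon_rel_def by auto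
        moreover have "i \<noteq> a" using Dt(2) z zi by auto
        ultimately show "case z of (i, l) \<Rightarrow> False \<and> i = a + 1 \<and> l + 1 = b \<or> (i - 1, l + 1) \<in> P \<or> (i + 1, l - 1) \<in> P"
          using zi by auto
      qed
      then have "cfp False f'" by (rule f'(3))
      then show ?thesis by (simp add: cfp_cons)
    qed
    show ?thesis
      by (intro exI[of _ "D # f'"]) (use f' cha ups nab can in auto)
  next
    case (Pr j)
    note aj = Pr
    have jb: "a < j" "j < b" "a + 1 < j" using bP[OF aj] by auto
    define P1 where "P1 = {(k,l). (k,l) \<in> P \<and> a < k \<and> l < j}"
    define P2 where "P2 = {(k,l). (k,l) \<in> P \<and> j < k}"
    have ss1: "ssi (a+1) j P1"
    proof (rule ssiI)
      fix i l assume "(i,l) \<in> P1"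
      then show "a + 1 \<le> i \<and> i < l \<and> l < j \<and> i + 1 < l" using bP[of i l] unfolding P1_def by auto
    next
      fix i l k m assume "(i,l) \<in> P1" "(k,m) \<in> P1"
      then have "(i,l) \<in> P" "(k,m) \<in> P" unfolding P1_def by auto
      then show "\<not> (i < k \<and> k < l \<and> l < m)" by (rule nP)
    next
      fix i l k m assume "(i,l) \<in> P1" "(k,m) \<in> P1" "(i,l) \<noteq> (k,m)"
      then have "(i,l) \<in> P" "(k,m) \<in> P" "(i,l) \<noteq> (k,m)" unfolding P1_def by auto
      then show "i \<noteq> k \<and> i \<noteq> m \<and> l \<noteq> k \<and> l \<noteq> m" by (rule dP)
    qed
    have ss2: "ssi (j+1) b P2"
    proof (rule ssiI)
      fix i l assume "(i,l) \<in> P2"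
      then show "j + 1 \<le> i \<and> i < l \<and> l < b \<and> i + 1 < l" using bP[of i l] unfolding P2_def by auto
    next
      fix i l k m assume "(i,l) \<in> P2" "(k,m) \<in> P2"
      then have "(i,l) \<in> P" "(k,m) \<in> P" unfolding P2_def by auto
      then show "\<not> (i < k \<and> k < l \<and> l < m)" by (rule nP)
    next
      fix i l k m assume "(i,l) \<in> P2" "(k,m) \<in> P2" "(i,l) \<noteq> (k,m)"
      then have "(i,l) \<in> P" "(k,m) \<in> P" "(i,l) \<noteq> (k,m)" unfolding P2_def by auto
      then show "i \<noteq> k \<and> i \<noteq> m \<and> l \<noteq> k \<and> l \<noteq> m" by (rule dP)
    qed
    obtain f1 where f1: "okl f1" "wdf f1 = map (ch P1) [a+1..<j]" "(a+1, j-1) \<in> P1 \<Longrightarrow> \<exists>x. f1 = [N x]"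
        "\<And>p. canon_rel p (a+1) j P1 \<Longrightarrow> cfp p f1"
    proof -
      have lt: "j - (a+1) < b - a" using jb by simp
      from less.hyps[of j "a+1" P1, OF lt ss1] show ?thesis using that by auto
    qed
    obtain f2 where f2: "okl f2" "wdf f2 = map (ch P2) [j+1..<b]"
        "\<And>p. canon_rel p (j+1) b P2 \<Longrightarrow> cfp p f2"
    proof -
      have lt: "b - (j+1) < b - a" using jb by simp
      from less.hyps[of b "j+1" P2, OF lt ss2] show ?thesis using that by blast
    qed
    have inP1: "(k,m) \<in> P1" if "a < k" "k < j" "(k,m) \<in> P" for k m
    proof -
      have "m \<le> j" using nP[OF aj that(3)] that by auto
      moreover have "m \<noteq> j"
      proof -
        have "(a,j) \<noteq> (k,m)" using that(1) by simp
        from dP[OF aj that(3) this] show ?thesis by simp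
      qed
      ultimately show ?thesis using that unfolding P1_def by auto
    qed
    have inP1': "(i,k) \<in> P1" if "a < k" "k < j" "(i,k) \<in> P" for i k
    proof -
      have "(a,j) \<noteq> (i,k)" using that(2) by simp
      from dP[OF aj that(3) this] have "i \<noteq> a" by simp
      then show ?thesis using bP[OF that(3)] that unfolding P1_def by auto
    qed
    have inP2': "(i,k) \<in> P2" if "j < k" "(i,k) \<in> P" for i k
    proof -
      have ne: "(a,j) \<noteq> (i,k)" using that(1) by simp
      from dP[OF aj that(2) ne] have "i \<noteq> a" "i \<noteq> j" by auto
      moreover have "\<not> (a < i \<and> i < j)" using nP[OF aj that(2)] that by auto
      ultimately have "j < i" using bP[OF that(2)] by auto
      then show ?thesis using that unfolding P2_def by auto
    qed
    have P1sub: "P1 \<subseteq> P" unfolding P1_def by auto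
    have P2sub: "P2 \<subseteq> P" unfolding P2_def by auto
    have chP1: "ch P k = ch P1 k" if "a < k" "k < j" for k
    proof -
      have e1: "(\<exists>m. (k,m)\<in>P) \<longleftrightarrow> (\<exists>m. (k,m)\<in>P1)" using inP1[OF that] P1sub by blast
      have e2: "(\<exists>i. (i,k)\<in>P) \<longleftrightarrow> (\<exists>i. (i,k)\<in>P1)" using inP1'[OF that] P1sub by blast
      show ?thesis unfolding ch_def e1 e2 ..
    qed
    have chP2: "ch P k = ch P2 k" if "j < k" for k
    proof -
      have e1: "(\<exists>m. (k,m)\<in>P) \<longleftrightarrow> (\<exists>m. (k,m)\<in>P2)" using that P2sub unfolding P2_def by blast
      have e2: "(\<exists>i. (i,k)\<in>P) \<longleftrightarrow> (\<exists>i. (i,k)\<in>P2)" using inP2'[OF that] P2sub by blast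
      show ?thesis unfolding ch_def e1 e2 ..
    qed
    have cha: "ch P a = Op" using aj unfolding ch_def by auto
    have chj: "ch P j = Cl"
    proof -
      have "\<not> (\<exists>m. (j,m) \<in> P)"
      proof
        assume "\<exists>m. (j,m) \<in> P"
        then obtain m where "(j,m) \<in> P" by blast
        moreover have "(a,j) \<noteq> (j,m)" using jb by simp
        ultimately show False using dP[OF aj] by blast
      qed
      then show ?thesis using aj unfolding ch_def by auto
    qed
    have m1: "map (ch P) [a+1..<j] = map (ch P1) [a+1..<j]" by (rule map_cong[OF refl]) (auto intro: chP1)
    have m2: "map (ch P) [j+1..<b] = map (ch P2) [j+1..<b]" by (rule map_cong[OF refl]) (auto intro: chP2)
    have wd: "wdf (N f1 # f2) = map (ch P) [a..<b]"
      unfolding upt_split3[OF jb(1,2)] using m1 m2 cha chj f1(2) f2(2) by simp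
    have f1ne: "f1 \<noteq> []" using f1(2) jb by auto
    have f2e: "f2 = []" if "j + 1 = b" using f2(2) that by simp
    have f2ne: "j + 1 < b" if "f2 \<noteq> []" using f2(2) that jb by (cases "j + 1 < b") auto
    have top: "\<exists>x. N f1 # f2 = [N x]" if "(a, b-1) \<in> P"
    proof -
      have "j = b - 1"
      proof (rule ccontr)
        assume "j \<noteq> b - 1"
        then have "(a,j) \<noteq> (a,b-1)" by simp
        from dP[OF aj that this] show False by simp
      qed
      then show ?thesis using f2e jb by auto
    qed
    have can: "cfp p (N f1 # f2)" if cr: "canon_rel p a b P" for p
    proof -
      have cr1: "canon_rel True (a+1) j P1" unfolding canon_rel_def
      proof (intro ballI)
        fix z assume z: "z \<in> P1"
        obtain i l where zi: "z = (i,l)" by (cases z)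
        with z have il: "(i,l) \<in> P" "a < i" "l < j" unfolding P1_def by auto
        from cr il(1) have "(p \<and> i = a \<and> l + 1 = b) \<or> (i-1, l+1) \<in> P \<or> (i+1, l-1) \<in> P"
          unfolding canon_rel_def by auto
        then have "(i = a+1 \<and> l + 1 = j) \<or> (i-1, l+1) \<in> P1 \<or> (i+1, l-1) \<in> P1"
        proof (elim disjE)
          assume h: "(i-1, l+1) \<in> P"
          show ?thesis
          proof (cases "i - 1 = a")
            case True
            have "l + 1 = j"
            proof (rule ccontr)
              assume "l + 1 \<noteq> j"
              then have "(a,j) \<noteq> (i-1,l+1)" by simp
              from dP[OF aj h this] True show False by simp
            qed
            then show ?thesis using True il by auto
          next
            case False
            then have "a < i - 1" using bP[OF h] by auto
            moreover have "l + 1 \<noteq> j"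
            proof -
              have "(a,j) \<noteq> (i-1,l+1)" using False by simp
              from dP[OF aj h this] show ?thesis by simp
            qed
            ultimately show ?thesis using h il unfolding P1_def by auto
          qed
        next
          assume h: "(i+1, l-1) \<in> P"
          then show ?thesis using il unfolding P1_def by auto
        qed (use il in auto)
        then show "case z of (i, l) \<Rightarrow> True \<and> i = a + 1 \<and> l + 1 = j \<or> (i - 1, l + 1) \<in> P1 \<or> (i + 1, l - 1) \<in> P1"
          using zi by auto
      qed
      have cr2: "canon_rel False (j+1) b P2" unfolding canon_rel_def
      proof (intro ballI)
        fix z assume z: "z \<in> P2"
        obtain i l where zi: "z = (i,l)" by (cases z)
        with z have il: "(i,l) \<in> P" "j < i" unfolding P2_def by auto
        from cr il(1) have "(p \<and> i = a \<and> l + 1 = b) \<or> (i-1, l+1) \<in> P \<or> (i+1, l-1) \<in> P"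
          unfolding canon_rel_def by auto
        then have "(i-1, l+1) \<in> P2 \<or> (i+1, l-1) \<in> P2"
        proof (elim disjE)
          assume h: "(i-1, l+1) \<in> P"
          have "i - 1 \<noteq> j"
          proof
            assume e: "i - 1 = j"
            have "(a,j) \<noteq> (i-1,l+1)" using e jb by simp
            from dP[OF aj h this] e show False by simp
          qed
          then show ?thesis using h il unfolding P2_def by auto
        next
          assume h: "(i+1, l-1) \<in> P"
          then show ?thesis using il unfolding P2_def by auto
        qed (use il jb in auto)
        then show "case z of (i, l) \<Rightarrow> False \<and> i = j + 1 \<and> l + 1 = b \<or> (i - 1, l + 1) \<in> P2 \<or> (i + 1, l - 1) \<in> P2"
          using zi by auto
      qed
      have root: "(p \<and> j + 1 = b) \<or> (a+1, j-1) \<in> P"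
      proof -
        from cr aj have "(p \<and> a = a \<and> j + 1 = b) \<or> (a-1, j+1) \<in> P \<or> (a+1, j-1) \<in> P"
          unfolding canon_rel_def by auto
        moreover have "(a-1, j+1) \<notin> P"
        proof
          assume h: "(a-1, j+1) \<in> P"
          then have "a = 0" using bP[OF h] by auto
          moreover have "(a,j) \<noteq> (a-1, j+1)" by simp
          ultimately show False using dP[OF aj h] by simp
        qed
        ultimately show ?thesis by auto
      qed
      have nx: "\<exists>x. f1 = [N x]" if "(a+1, j-1) \<in> P"
        using f1(3) that jb unfolding P1_def by auto
      show ?thesis
      proof (cases "f2 = []")
        case True
        then show ?thesis using f1ne f1(4)[OF cr1] root nx by (auto simp: cfp_cons)
      next
        case False
        then show ?thesis using f1ne f1(4)[OF cr1] f2(3)[OF cr2] root nx f2ne by (auto simp: cfp_cons)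
      qed
    qed
    show ?thesis
      by (intro exI[of _ "N f1 # f2"]) (use f1(1) f2(1) f1ne wd top can in auto)
  qed
qed




lemma is_ss_iff: "is_ss w \<longleftrightarrow> (\<exists>f. okl f \<and> wdf f = w)"
proof
  assume "is_ss w"
  then obtain P where P: "sec_struct (length w) P" "dotbracket (length w) P = w" unfolding is_ss_def by blast
  from P(1) have "ssi 1 (length w + 1) P" by (simp add: sec_struct_ssi)
  from F2[OF this] obtain f where "okl f" "wdf f = map (ch P) [1..<length w + 1]" by blast
  then show "\<exists>f. okl f \<and> wdf f = w" using P(2) by (auto simp: dotbracket_ch)
next
  assume "\<exists>f. okl f \<and> wdf f = w"
  then obtain f where f: "okl f" "wdf f = w" by blast
  from F1(2)[OF f(1), of 1] f(2) have "ssi 1 (length w + 1) (pl 1 f)" "map (ch (pl 1 f)) [1..<length w + 1] = w"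
    by (auto simp: add.commute)
  then show "is_ss w" unfolding is_ss_def by (auto simp: sec_struct_ssi dotbracket_ch)
qed

lemma is_can_iff: "is_canonical_ss w \<longleftrightarrow> (\<exists>f. cfp False f \<and> wdf f = w)"
proof
  assume "is_canonical_ss w"
  then obtain P where P: "sec_struct (length w) P" "dotbracket (length w) P = w" "canonical P"
    unfolding is_canonical_ss_def by blast
  from P(1) have "ssi 1 (length w + 1) P" by (simp add: sec_struct_ssi)
  from F2[OF this] obtain f where "wdf f = map (ch P) [1..<length w + 1]"
     "canon_rel False 1 (length w + 1) P \<Longrightarrow> cfp False f" by blast
  moreover have "canon_rel False 1 (length w + 1) P" using P(3) canonical_rel by blast
  ultimately show "\<exists>f. cfp False f \<and> wdf f = w" using P(2) by (auto simp: dotbracket_ch)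
next
  assume "\<exists>f. cfp False f \<and> wdf f = w"
  then obtain f where f: "cfp False f" "wdf f = w" by blast
  have ok: "okl f" using cf_ok(2)[OF f(1)] .
  from F1(2)[OF ok, of 1] f have "ssi 1 (length w + 1) (pl 1 f)" "map (ch (pl 1 f)) [1..<length w + 1] = w"
    "canon_rel False 1 (length w + 1) (pl 1 f)"
    by (auto simp: add.commute)
  then show "is_canonical_ss w" unfolding is_canonical_ss_def
    by (auto simp: sec_struct_ssi dotbracket_ch canonical_rel[of _ 1 "length w + 1"])
qed

lemma single_tree: assumes "bal w" "wdf h = Op # w @ [Cl]" shows "\<exists>y. h = [N y] \<and> wdf y = w"
proof (cases h)
  case Nil then show ?thesis using assms by simp
next
  case (Cons t h')
  show ?thesis
  proof (cases t)
    case D then show ?thesis using assms Cons by simp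
  next
    case (N y)
    with assms Cons have eq: "wdf y @ Cl # wdf h' = w @ [Cl]" by simp
    show ?thesis
    proof (cases "h' = []")
      case True then show ?thesis using eq Cons N by simp
    next
      case False
      then obtain z c where zc: "wdf h' = z @ [c]" by (metis rev_exhaust wdf_Nil_iff)
      with eq have "(wdf y @ Cl # z) @ [c] = w @ [Cl]" by simp
      then have "w = wdf y @ [Cl] @ z" by simp
      with assms(1) have "ht (wdf y @ [Cl]) \<ge> 0" unfolding bal_def by (metis append.assoc)
      moreover have "ht (wdf y) = 0" using bal_wdf[of y] unfolding bal_def by simp
      ultimately show ?thesis by simp
    qed
  qed
qed

lemma lang_S_char: "lang S = {w. w \<noteq> [] \<and> is_canonical_ss w}"
  unfolding lang_L using L_S_iff is_can_iff by fastforce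

lemma lang_R_char: "lang R = {w. w \<noteq> [] \<and> is_ss w \<and> is_canonical_ss (Op # w @ [Cl])}"
proof -
  have "L R w \<longleftrightarrow> w \<noteq> [] \<and> is_ss w \<and> is_canonical_ss (Op # w @ [Cl])" for w
  proof
    assume "L R w"
    then obtain x where x: "x \<noteq> []" "cfp True x" "w = Op # wdf x @ [Cl]" using L_R_iff by blast
    have "okl [N x]" using cf_ok(2)[OF x(2)] x(1) by simp
    then have "is_ss w" using x(3) is_ss_iff by (metis wdf.simps wdt.simps(2) append_Nil2)
    moreover have "is_canonical_ss (Op # w @ [Cl])"
      unfolding is_can_iff using x by (intro exI[of _ "[N [N x]]"]) simp
    ultimately show "w \<noteq> [] \<and> is_ss w \<and> is_canonical_ss (Op # w @ [Cl])" using x(3) by simp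
  next
    assume a: "w \<noteq> [] \<and> is_ss w \<and> is_canonical_ss (Op # w @ [Cl])"
    then obtain g where "wdf g = w" using is_ss_iff by blast
    then have b: "bal w" using bal_wdf by blast
    obtain h where h: "cfp False h" "wdf h = Op # w @ [Cl]" using a is_can_iff by blast
    from single_tree[OF b h(2)] obtain y where y: "h = [N y]" "wdf y = w" by blast
    with h(1) obtain x where x: "y = [N x]" "cfp True y" by auto
    with h y show "L R w" unfolding L_R_iff using x by (intro exI[of _ x]) auto
  qed
  then show ?thesis unfolding lang_L by blast
qed




lemma lm_step_step: "lm_step r \<alpha> \<beta> \<Longrightarrow> step \<alpha> \<beta>"
  unfolding lm_step_def step_def by (cases r) auto

lemma lm_deriv_steps: "lm_deriv \<alpha> rs \<beta> \<Longrightarrow> step\<^sup>*\<^sup>* \<alpha> \<beta>"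
proof (induction rule: lm_deriv.induct)
  case (lm_nil \<alpha>) then show ?case by simp
next
  case (lm_cons r \<alpha> \<beta> rs \<gamma>)
  from lm_step_step[OF lm_cons(1)] lm_cons(3) show ?case by (rule converse_rtranclp_into_rtranclp)
qed

lemma lm_deriv_gen: "lm_deriv \<alpha> rs (map Tm w) \<Longrightarrow> gen \<alpha> w"
  using steps_gen[OF lm_deriv_steps] gen_map_Tm by blast

lemma Nt_notin_map: "map Tm u \<noteq> map Tm u' @ Nt A # v"
proof
  assume "map Tm u = map Tm u' @ Nt A # v"
  then have "Nt A \<in> set (map Tm u)" by simp
  then show False by auto
qed

lemma lm_term: assumes "lm_deriv (map Tm u) rs \<gamma>" shows "rs = [] \<and> \<gamma> = map Tm u"
  using assms
proof (cases rule: lm_deriv.cases)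
  case lm_nil then show ?thesis by simp
next
  case (lm_cons r \<beta> rs')
  from lm_cons(2) obtain u' v where "map Tm u = map Tm u' @ Nt (fst r) # v" unfolding lm_step_def by blast
  with Nt_notin_map show ?thesis by blast
qed

lemma lm_split: "lm_deriv \<gamma> rs \<delta> \<Longrightarrow> \<gamma> = \<alpha> @ \<beta> \<Longrightarrow> \<delta> = map Tm w \<Longrightarrow>
  \<exists>rs1 rs2 w1 w2. rs = rs1 @ rs2 \<and> w = w1 @ w2 \<and> lm_deriv \<alpha> rs1 (map Tm w1) \<and> lm_deriv \<beta> rs2 (map Tm w2)"
proof (induction arbitrary: \<alpha> \<beta> rule: lm_deriv.induct)
  case (lm_nil \<gamma>)
  then obtain w1 w2 where "\<alpha> = map Tm w1" "\<beta> = map Tm w2" "w = w1 @ w2"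
    by (metis map_eq_append_conv)
  then show ?case by (intro exI[of _ "[]"] exI[of _ w1] exI[of _ w2]) (auto intro: lm_deriv.lm_nil)
next
  case (lm_cons r \<gamma> \<beta>' rs \<delta>)
  from lm_cons.hyps(1) obtain u v where r: "r \<in> rules" and g: "\<gamma> = map Tm u @ Nt (fst r) # v"
    and b: "\<beta>' = map Tm u @ snd r @ v" unfolding lm_step_def by blast
  from g lm_cons.prems(1) have "\<alpha> @ \<beta> = map Tm u @ Nt (fst r) # v" by simp
  then obtain us where us: "(\<alpha> = map Tm u @ us \<and> us @ \<beta> = Nt (fst r) # v) \<or> (\<alpha> @ us = map Tm u \<and> \<beta> = us @ Nt (fst r) # v)"
    by (auto simp: append_eq_append_conv2)
  show ?case
  proof (cases "\<exists>us'. \<alpha> = map Tm u @ Nt (fst r) # us' \<and> v = us' @ \<beta>")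
    case True
    then obtain us' where a: "\<alpha> = map Tm u @ Nt (fst r) # us'" and v: "v = us' @ \<beta>" by blast
    have "\<beta>' = (map Tm u @ snd r @ us') @ \<beta>" using b v by simp
    from lm_cons.IH[OF this lm_cons.prems(2)] obtain rs1 rs2 w1 w2 where
      IH: "rs = rs1 @ rs2" "w = w1 @ w2" "lm_deriv (map Tm u @ snd r @ us') rs1 (map Tm w1)" "lm_deriv \<beta> rs2 (map Tm w2)"
      by blast
    have "lm_step r \<alpha> (map Tm u @ snd r @ us')" unfolding lm_step_def using r a by blast
    then have "lm_deriv \<alpha> (r # rs1) (map Tm w1)" using IH(3) by (rule lm_deriv.lm_cons)
    then show ?thesis using IH by (intro exI[of _ "r # rs1"] exI[of _ rs2] exI[of _ w1] exI[of _ w2]) auto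
  next
    case False
    have "\<exists>us. \<alpha> @ us = map Tm u \<and> \<beta> = us @ Nt (fst r) # v"
      using us
    proof (elim disjE conjE)
      assume h: "\<alpha> = map Tm u @ us" "us @ \<beta> = Nt (fst r) # v"
      show ?thesis
      proof (cases us)
        case Nil then show ?thesis using h by (intro exI[of _ "[]"]) simp
      next
        case (Cons c us')
        then have "\<alpha> = map Tm u @ Nt (fst r) # us'" "v = us' @ \<beta>" using h by auto
        then show ?thesis using False by blast
      qed
    qed blast
    then obtain us where a: "\<alpha> @ us = map Tm u" and bb: "\<beta> = us @ Nt (fst r) # v" by blast
    then obtain u1 u2 where u: "\<alpha> = map Tm u1" "us = map Tm u2" "u = u1 @ u2"
      by (metis map_eq_append_conv)
    have "\<beta>' = \<alpha> @ (map Tm u2 @ snd r @ v)" using b u by simp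
    from lm_cons.IH[OF this lm_cons.prems(2)] obtain rs1 rs2 w1 w2 where
      IH: "rs = rs1 @ rs2" "w = w1 @ w2" "lm_deriv \<alpha> rs1 (map Tm w1)" "lm_deriv (map Tm u2 @ snd r @ v) rs2 (map Tm w2)"
      by blast
    from lm_term[OF IH(3)[unfolded u(1)]] have "rs1 = []" by simp
    have "lm_step r \<beta> (map Tm u2 @ snd r @ v)" unfolding lm_step_def using r bb u(2) by blast
    then have "lm_deriv \<beta> (r # rs2) (map Tm w2)" using IH(4) by (rule lm_deriv.lm_cons)
    then show ?thesis using IH \<open>rs1 = []\<close>
      by (intro exI[of _ "[]"] exI[of _ "r # rs2"] exI[of _ w1] exI[of _ w2]) auto
  qed
qed

lemma lmT: assumes "lm_deriv (Tm a # \<beta>) rs (map Tm w)" shows "\<exists>w'. w = a # w' \<and> lm_deriv \<beta> rs (map Tm w')"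
proof -
  have e: "Tm a # \<beta> = [Tm a] @ \<beta>" by simp
  from lm_split[OF assms e refl] obtain rs1 rs2 w1 w2 where
    s: "rs = rs1 @ rs2" "w = w1 @ w2" "lm_deriv [Tm a] rs1 (map Tm w1)" "lm_deriv \<beta> rs2 (map Tm w2)" by blast
  from lm_term[of "[a]" rs1 "map Tm w1"] s(3) have "rs1 = [] \<and> map Tm w1 = map Tm [a]" by simp
  then have "rs1 = []" "w1 = [a]" by (auto simp: map_eq_Cons_conv)
  then show ?thesis using s by simp
qed

lemma lmN: assumes "lm_deriv (Nt A # \<beta>) rs (map Tm w)" shows "\<exists>rs1 rs2 w1 w2. rs = rs1 @ rs2 \<and> w = w1 @ w2 \<and>
   lm_deriv [Nt A] rs1 (map Tm w1) \<and> lm_deriv \<beta> rs2 (map Tm w2)"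
proof -
  have e: "Nt A # \<beta> = [Nt A] @ \<beta>" by simp
  from lm_split[OF assms e refl] show ?thesis .
qed

lemma lmE: assumes "lm_deriv [] rs (map Tm w)" shows "rs = [] \<and> w = []"
proof -
  from lm_term[of "[]" rs "map Tm w"] assms have "rs = [] \<and> map Tm w = []" by simp
  then show ?thesis by simp
qed

lemma lm_first: assumes "lm_deriv [Nt A] rs (map Tm w)" shows
   "\<exists>rhs rs'. rs = (A, rhs) # rs' \<and> (A, rhs) \<in> rules \<and> lm_deriv rhs rs' (map Tm w)"
  using assms
proof (cases rule: lm_deriv.cases)
  case lm_nil
  then have "map Tm w = [Nt A]" by simp
  then show ?thesis by (auto simp: map_eq_Cons_conv)
next
  case (lm_cons r \<beta> rs')
  from lm_cons(2) obtain u v where r: "r \<in> rules" "[Nt A] = map Tm u @ Nt (fst r) # v" "\<beta> = map Tm u @ snd r @ v"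
    unfolding lm_step_def by blast
  have u: "u = []"
  proof (cases u)
    case (Cons x xs) with r(2) show ?thesis by simp
  qed simp
  with r(2) have v: "v = []" and f: "fst r = A" by simp_all
  have rr: "r = (A, snd r)" using f by (cases r) simp
  have "lm_deriv (snd r) rs' (map Tm w)" using lm_cons(3) r(3) u v by simp
  moreover have "rs = (A, snd r) # rs'" using lm_cons(1) rr by simp
  moreover have "(A, snd r) \<in> rules" using r(1) rr by simp
  ultimately show ?thesis by blast
qed

lemma LS_facts: "L S u \<Longrightarrow> u \<noteq> [] \<and> bal u"
  using L_S_iff bal_wdf by fastforce

lemma LR_facts: "L R v \<Longrightarrow> bal v \<and> (\<exists>y. v = Op # y @ [Cl] \<and> bal y)"
proof -
  assume "L R v"
  then obtain x where "v = Op # wdf x @ [Cl]" using L_R_iff by blast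
  moreover have "bal (wdf [N x])" by (rule bal_wdf)
  ultimately show ?thesis using bal_wdf[of x] by simp
qed

lemma SU: assumes "bal a1" "bal b1" "bal a2" "bal b2" "a1 @ Op # b1 @ [Cl] = a2 @ Op # b2 @ [Cl]"
  shows "a1 = a2"
proof -
  have key: "x1 = x2" if h: "bal x1" "bal y1" "bal x2" "x1 @ Op # y1 @ [Cl] = x2 @ Op # y2 @ [Cl]"
      "length x1 \<le> length x2" for x1 y1 x2 y2
  proof (rule ccontr)
    assume ne: "x1 \<noteq> x2"
    from h(4) obtain us where us: "(x1 = x2 @ us \<and> us @ Op # y1 @ [Cl] = Op # y2 @ [Cl]) \<or>
        (x1 @ us = x2 \<and> Op # y1 @ [Cl] = us @ Op # y2 @ [Cl])"
      by (auto simp: append_eq_append_conv2)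
    then have "x1 @ us = x2 \<and> Op # y1 @ [Cl] = us @ Op # y2 @ [Cl] \<and> us \<noteq> []"
      using ne h(5) by auto
    then obtain us' where x2: "x2 = x1 @ Op # us'" and e: "y1 @ [Cl] = us' @ Op # y2 @ [Cl]"
      by (auto simp: Cons_eq_append_conv)
    have "\<exists>zs. y1 = us' @ zs"
    proof -
      from e have "y1 @ [Cl] = us' @ Op # y2 @ [Cl]" .
      then obtain zs where "(y1 = us' @ zs \<and> zs @ [Cl] = Op # y2 @ [Cl]) \<or> (y1 @ zs = us' \<and> [Cl] = zs @ Op # y2 @ [Cl])"
        by (auto simp: append_eq_append_conv2)
      then show ?thesis by (auto simp: Cons_eq_append_conv)
    qed
    then obtain zs where "y1 = us' @ zs" by blast
    then have "ht us' \<ge> 0" using h(2) unfolding bal_def by blast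
    moreover have "ht x2 = 0" "ht x1 = 0" using h(1,3) unfolding bal_def by auto
    ultimately show False using x2 by simp
  qed
  show ?thesis
  proof (cases "length a1 \<le> length a2")
    case True then show ?thesis using key[of a1 b1 a2 b2] assms by blast
  next
    case False then show ?thesis using key[of a2 b2 a1 b1] assms by fastforce
  qed
qed




lemma lm_L: "lm_deriv [Nt A] rs (map Tm w) \<Longrightarrow> L A w"
  using lm_deriv_gen[of "[Nt A]" rs w] by simp

lemma lm_terms: "lm_deriv (map Tm u @ \<beta>) rs (map Tm w) \<Longrightarrow> \<exists>w'. w = u @ w' \<and> lm_deriv \<beta> rs (map Tm w')"
proof (induction u arbitrary: w)
  case Nil then show ?case by simp
next
  case (Cons a u)
  from lmT[of a "map Tm u @ \<beta>" rs w] Cons.prems obtain w' where "w = a # w'" "lm_deriv (map Tm u @ \<beta>) rs (map Tm w')"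
    by auto
  with Cons.IH show ?case by auto
qed

lemma lm_tail: assumes "lm_deriv (Nt A # map Tm u) rs (map Tm w)"
  shows "\<exists>w1. w = w1 @ u \<and> lm_deriv [Nt A] rs (map Tm w1)"
proof -
  from lmN[OF assms] obtain rs1 rs2 w1 w2 where s: "rs = rs1 @ rs2" "w = w1 @ w2"
    "lm_deriv [Nt A] rs1 (map Tm w1)" "lm_deriv (map Tm u) rs2 (map Tm w2)" by blast
  from lm_term[OF s(4)] have "rs2 = []" "map Tm w2 = map Tm u" by auto
  moreover have "inj Tm" by (auto intro: injI)
  ultimately have "rs2 = []" "w2 = u" by (auto dest: inj_map_eq_map[THEN iffD1, rotated])
  then show ?thesis using s by auto
qed

lemma lm_mid: assumes "lm_deriv (Nt A # \<beta>) rs (map Tm w)"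
  shows "\<exists>rs1 rs2 w1 w2. rs = rs1 @ rs2 \<and> w = w1 @ w2 \<and> lm_deriv [Nt A] rs1 (map Tm w1) \<and> lm_deriv \<beta> rs2 (map Tm w2)"
  using lmN[OF assms] .

lemma map_Tm_inj: "map Tm u = map Tm v \<longleftrightarrow> u = v"
proof -
  have "inj Tm" by (auto intro: injI)
  then show ?thesis by (simp add: inj_map_eq_map)
qed

section \<open>Rule determination\<close>

lemma gen_forms:
  "gen [Tm Dot] w \<longleftrightarrow> w = [Dot]"
  "gen [Nt S, Tm Dot] w \<longleftrightarrow> (\<exists>u. w = u @ [Dot] \<and> L S u)"
  "gen [Tm Op, Nt R, Tm Cl] w \<longleftrightarrow> (\<exists>v. w = Op # v @ [Cl] \<and> L R v)"
  "gen [Nt S, Tm Op, Nt R, Tm Cl] w \<longleftrightarrow> (\<exists>u v. w = u @ Op # v @ [Cl] \<and> L S u \<and> L R v)"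
  "gen [Tm Op, Tm Dot, Tm Cl] w \<longleftrightarrow> w = [Op, Dot, Cl]"
  "gen [Tm Op, Nt S, Tm Op, Nt R, Tm Cl, Tm Cl] w \<longleftrightarrow> (\<exists>u v. w = Op # u @ Op # v @ [Cl, Cl] \<and> L S u \<and> L R v)"
  "gen [Tm Op, Nt S, Tm Dot, Tm Cl] w \<longleftrightarrow> (\<exists>u. w = Op # u @ [Dot, Cl] \<and> L S u)"
  by auto blast

lemma last_neq: "xs = ys \<Longrightarrow> last xs \<noteq> last ys \<Longrightarrow> False" by simp

lemma ex_S:
  "gen [Tm Dot] w \<Longrightarrow> gen [Nt S, Tm Dot] w \<Longrightarrow> False"
  "gen [Tm Dot] w \<Longrightarrow> gen [Tm Op, Nt R, Tm Cl] w \<Longrightarrow> False"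
  "gen [Tm Dot] w \<Longrightarrow> gen [Nt S, Tm Op, Nt R, Tm Cl] w \<Longrightarrow> False"
  "gen [Nt S, Tm Dot] w \<Longrightarrow> gen [Tm Op, Nt R, Tm Cl] w \<Longrightarrow> False"
  "gen [Nt S, Tm Dot] w \<Longrightarrow> gen [Nt S, Tm Op, Nt R, Tm Cl] w \<Longrightarrow> False"
  "gen [Tm Op, Nt R, Tm Cl] w \<Longrightarrow> gen [Nt S, Tm Op, Nt R, Tm Cl] w \<Longrightarrow> False"
proof -
  show "gen [Tm Dot] w \<Longrightarrow> gen [Nt S, Tm Dot] w \<Longrightarrow> False"
    unfolding gen_forms using LS_facts by (auto simp: append_eq_Cons_conv)
  show "gen [Tm Dot] w \<Longrightarrow> gen [Tm Op, Nt R, Tm Cl] w \<Longrightarrow> False"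
    unfolding gen_forms by auto
  show "gen [Tm Dot] w \<Longrightarrow> gen [Nt S, Tm Op, Nt R, Tm Cl] w \<Longrightarrow> False"
    unfolding gen_forms by (auto dest!: arg_cong[where f=last])
  show "gen [Nt S, Tm Dot] w \<Longrightarrow> gen [Tm Op, Nt R, Tm Cl] w \<Longrightarrow> False"
    unfolding gen_forms by (auto dest!: arg_cong[where f=last])
  show "gen [Nt S, Tm Dot] w \<Longrightarrow> gen [Nt S, Tm Op, Nt R, Tm Cl] w \<Longrightarrow> False"
    unfolding gen_forms by (auto dest!: arg_cong[where f=last])
  show "gen [Tm Op, Nt R, Tm Cl] w \<Longrightarrow> gen [Nt S, Tm Op, Nt R, Tm Cl] w \<Longrightarrow> False"
  proof -
    assume "gen [Tm Op, Nt R, Tm Cl] w" "gen [Nt S, Tm Op, Nt R, Tm Cl] w"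
    then obtain v u v' where e: "w = Op # v @ [Cl]" "L R v" "w = u @ Op # v' @ [Cl]" "L S u" "L R v'"
      unfolding gen_forms by blast
    have "[] @ Op # v @ [Cl] = u @ Op # v' @ [Cl]" using e by simp
    from SU[OF _ _ _ _ this] e LS_facts LR_facts have "[] = u" by (auto simp: bal_def)
    then show False using LS_facts[OF e(4)] by simp
  qed
qed

lemma ex_R:
  "gen [Tm Op, Tm Dot, Tm Cl] w \<Longrightarrow> gen [Tm Op, Nt R, Tm Cl] w \<Longrightarrow> False"
  "gen [Tm Op, Tm Dot, Tm Cl] w \<Longrightarrow> gen [Tm Op, Nt S, Tm Op, Nt R, Tm Cl, Tm Cl] w \<Longrightarrow> False"
  "gen [Tm Op, Tm Dot, Tm Cl] w \<Longrightarrow> gen [Tm Op, Nt S, Tm Dot, Tm Cl] w \<Longrightarrow> False"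
  "gen [Tm Op, Nt R, Tm Cl] w \<Longrightarrow> gen [Tm Op, Nt S, Tm Op, Nt R, Tm Cl, Tm Cl] w \<Longrightarrow> False"
  "gen [Tm Op, Nt R, Tm Cl] w \<Longrightarrow> gen [Tm Op, Nt S, Tm Dot, Tm Cl] w \<Longrightarrow> False"
  "gen [Tm Op, Nt S, Tm Op, Nt R, Tm Cl, Tm Cl] w \<Longrightarrow> gen [Tm Op, Nt S, Tm Dot, Tm Cl] w \<Longrightarrow> False"
proof -
  show "gen [Tm Op, Tm Dot, Tm Cl] w \<Longrightarrow> gen [Tm Op, Nt R, Tm Cl] w \<Longrightarrow> False"
  proof -
    assume "gen [Tm Op, Tm Dot, Tm Cl] w" "gen [Tm Op, Nt R, Tm Cl] w"
    then obtain v where "[Op, Dot, Cl] = Op # v @ [Cl]" "L R v" unfolding gen_forms by blast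
    then show False using LR_facts by force
  qed
  show "gen [Tm Op, Tm Dot, Tm Cl] w \<Longrightarrow> gen [Tm Op, Nt S, Tm Op, Nt R, Tm Cl, Tm Cl] w \<Longrightarrow> False"
    unfolding gen_forms by (auto dest!: arg_cong[where f=length])
  show "gen [Tm Op, Tm Dot, Tm Cl] w \<Longrightarrow> gen [Tm Op, Nt S, Tm Dot, Tm Cl] w \<Longrightarrow> False"
    unfolding gen_forms using LS_facts by auto
  show "gen [Tm Op, Nt R, Tm Cl] w \<Longrightarrow> gen [Tm Op, Nt S, Tm Op, Nt R, Tm Cl, Tm Cl] w \<Longrightarrow> False"
  proof -
    assume "gen [Tm Op, Nt R, Tm Cl] w" "gen [Tm Op, Nt S, Tm Op, Nt R, Tm Cl, Tm Cl] w"
    then obtain v u v' where e: "w = Op # v @ [Cl]" "L R v" "w = Op # u @ Op # v' @ [Cl, Cl]" "L S u" "L R v'"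
      unfolding gen_forms by blast
    obtain y where y: "v = Op # y @ [Cl]" "bal y" using LR_facts[OF e(2)] by blast
    have "[] @ Op # y @ [Cl] = u @ Op # v' @ [Cl]" using e y by simp
    from SU[OF _ _ _ _ this] y e LS_facts LR_facts have "[] = u" by (auto simp: bal_def)
    then show False using LS_facts[OF e(4)] by simp
  qed
  show "gen [Tm Op, Nt R, Tm Cl] w \<Longrightarrow> gen [Tm Op, Nt S, Tm Dot, Tm Cl] w \<Longrightarrow> False"
  proof -
    assume "gen [Tm Op, Nt R, Tm Cl] w" "gen [Tm Op, Nt S, Tm Dot, Tm Cl] w"
    then obtain v u where e: "w = Op # v @ [Cl]" "L R v" "w = Op # u @ [Dot, Cl]"
      unfolding gen_forms by blast
    obtain y where y: "v = Op # y @ [Cl]" using LR_facts[OF e(2)] by blast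
    from e y have "(Op # y) @ [Cl] = u @ [Dot]" by simp
    then show False by (auto dest!: arg_cong[where f=last])
  qed
  show "gen [Tm Op, Nt S, Tm Op, Nt R, Tm Cl, Tm Cl] w \<Longrightarrow> gen [Tm Op, Nt S, Tm Dot, Tm Cl] w \<Longrightarrow> False"
  proof -
    assume "gen [Tm Op, Nt S, Tm Op, Nt R, Tm Cl, Tm Cl] w" "gen [Tm Op, Nt S, Tm Dot, Tm Cl] w"
    then obtain u v u' where e: "w = Op # u @ Op # v @ [Cl, Cl]" "w = Op # u' @ [Dot, Cl]"
      unfolding gen_forms by blast
    then have "(u @ Op # v) @ [Cl] = u' @ [Dot]" by simp
    then show False by (auto dest!: arg_cong[where f=last])
  qed
qed

lemma rule_det: assumes "(A, r1) \<in> rules" "(A, r2) \<in> rules" "gen r1 w" "gen r2 w" shows "r1 = r2"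
  using assms unfolding rules_def
  by (auto simp del: gen.simps dest: ex_S ex_R ex_S[rotated] ex_R[rotated])




lemma dec_T: "lm_deriv (map Tm u) rs (map Tm w) \<Longrightarrow> rs = []"
  using lm_term by blast

lemma dec_NT: assumes "lm_deriv (Nt A # map Tm u) rs (map Tm w)"
  shows "\<exists>w1. w = w1 @ u \<and> lm_deriv [Nt A] rs (map Tm w1)"
  using lm_tail[OF assms] .

lemma dec_TNT: assumes "lm_deriv (map Tm u1 @ Nt A # map Tm u2) rs (map Tm w)"
  shows "\<exists>w1. w = u1 @ w1 @ u2 \<and> lm_deriv [Nt A] rs (map Tm w1)"
proof -
  from lm_terms[OF assms] obtain w' where "w = u1 @ w'" "lm_deriv (Nt A # map Tm u2) rs (map Tm w')" by blast
  with lm_tail show ?thesis by fastforce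
qed

lemma dec_NTNT: assumes "lm_deriv (Nt A # map Tm u1 @ Nt B # map Tm u2) rs (map Tm w)"
  shows "\<exists>rs1 rs2 w1 w2. rs = rs1 @ rs2 \<and> w = w1 @ u1 @ w2 @ u2 \<and> lm_deriv [Nt A] rs1 (map Tm w1) \<and> lm_deriv [Nt B] rs2 (map Tm w2)"
proof -
  from lmN[OF assms] obtain rs1 rs2 w1 w2 where s: "rs = rs1 @ rs2" "w = w1 @ w2"
    "lm_deriv [Nt A] rs1 (map Tm w1)" "lm_deriv (map Tm u1 @ Nt B # map Tm u2) rs2 (map Tm w2)" by blast
  from dec_TNT[OF s(4)] obtain w3 where "w2 = u1 @ w3 @ u2" "lm_deriv [Nt B] rs2 (map Tm w3)" by blast
  with s show ?thesis by blast
qed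

lemma lm_unique: "lm_deriv [Nt A] rs1 (map Tm w) \<Longrightarrow> lm_deriv [Nt A] rs2 (map Tm w) \<Longrightarrow> rs1 = rs2"
proof (induction "length w" arbitrary: A w rs1 rs2 rule: less_induct)
  case less
  have IH: "r1 = r2" if "length v < length w" "lm_deriv [Nt B] r1 (map Tm v)" "lm_deriv [Nt B] r2 (map Tm v)" for B v r1 r2
    using less.hyps that by blast
  from lm_first[OF less.prems(1)] obtain rhs1 rs1' where d1: "rs1 = (A, rhs1) # rs1'" "(A, rhs1) \<in> rules"
    "lm_deriv rhs1 rs1' (map Tm w)" by blast
  from lm_first[OF less.prems(2)] obtain rhs2 rs2' where d2: "rs2 = (A, rhs2) # rs2'" "(A, rhs2) \<in> rules"
    "lm_deriv rhs2 rs2' (map Tm w)" by blast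
  have eq: "rhs1 = rhs2" using rule_det[OF d1(2) d2(2) lm_deriv_gen[OF d1(3)] lm_deriv_gen[OF d2(3)]] .
  let ?r = rhs1
  have D1: "lm_deriv ?r rs1' (map Tm w)" "lm_deriv ?r rs2' (map Tm w)" using d1 d2 eq by auto
  have "rs1' = rs2'"
  proof -
    from d1(2) consider
        "?r = [Tm Dot]" | "?r = [Nt S, Tm Dot]" | "?r = [Tm Op, Nt R, Tm Cl]" | "?r = [Nt S, Tm Op, Nt R, Tm Cl]"
      | "?r = [Tm Op, Tm Dot, Tm Cl]" | "?r = [Tm Op, Nt R, Tm Cl]" | "?r = [Tm Op, Nt S, Tm Op, Nt R, Tm Cl, Tm Cl]"
      | "?r = [Tm Op, Nt S, Tm Dot, Tm Cl]"
      unfolding rules_def by blast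
    then show ?thesis
    proof cases
      case 1
      then have "?r = map Tm [Dot]" by simp
      then show ?thesis using D1 dec_T by metis
    next
      case 2
      then have r: "?r = Nt S # map Tm [Dot]" by simp
      from dec_NT[OF D1(1)[unfolded r]] obtain a where a: "w = a @ [Dot]" "lm_deriv [Nt S] rs1' (map Tm a)" by blast
      from dec_NT[OF D1(2)[unfolded r]] obtain b where b: "w = b @ [Dot]" "lm_deriv [Nt S] rs2' (map Tm b)" by blast
      from a b have "a = b" by simp
      then show ?thesis using IH[of a S rs1' rs2'] a b by simp
    next
      case 3
      then have r: "?r = map Tm [Op] @ Nt R # map Tm [Cl]" by simp
      from dec_TNT[OF D1(1)[unfolded r]] obtain a where a: "w = [Op] @ a @ [Cl]" "lm_deriv [Nt R] rs1' (map Tm a)" by blast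
      from dec_TNT[OF D1(2)[unfolded r]] obtain b where b: "w = [Op] @ b @ [Cl]" "lm_deriv [Nt R] rs2' (map Tm b)" by blast
      from a b have "a = b" by simp
      then show ?thesis using IH[of a R rs1' rs2'] a b by simp
    next
      case 4
      then have r: "?r = Nt S # map Tm [Op] @ Nt R # map Tm [Cl]" by simp
      from dec_NTNT[OF D1(1)[unfolded r]] obtain ra1 ra2 a1 a2 where
        a: "rs1' = ra1 @ ra2" "w = a1 @ [Op] @ a2 @ [Cl]" "lm_deriv [Nt S] ra1 (map Tm a1)" "lm_deriv [Nt R] ra2 (map Tm a2)" by blast
      from dec_NTNT[OF D1(2)[unfolded r]] obtain rb1 rb2 b1 b2 where
        b: "rs2' = rb1 @ rb2" "w = b1 @ [Op] @ b2 @ [Cl]" "lm_deriv [Nt S] rb1 (map Tm b1)" "lm_deriv [Nt R] rb2 (map Tm b2)" by blast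
      have bal: "bal a1" "bal a2" "bal b1" "bal b2"
        using LS_facts[OF lm_L[OF a(3)]] LR_facts[OF lm_L[OF a(4)]] LS_facts[OF lm_L[OF b(3)]] LR_facts[OF lm_L[OF b(4)]] by auto
      have "a1 @ Op # a2 @ [Cl] = b1 @ Op # b2 @ [Cl]" using a b by simp
      from SU[OF bal(1,2,3,4) this] have e1: "a1 = b1" .
      with a b have e2: "a2 = b2" by simp
      have "ra1 = rb1" using IH[of a1 S ra1 rb1] a b e1 by simp
      moreover have "ra2 = rb2" using IH[of a2 R ra2 rb2] a b e2 by simp
      ultimately show ?thesis using a b by simp
    next
      case 5
      then have "?r = map Tm [Op, Dot, Cl]" by simp
      then show ?thesis using D1 dec_T by metis
    next
      case 6
      then have r: "?r = map Tm [Op] @ Nt R # map Tm [Cl]" by simp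
      from dec_TNT[OF D1(1)[unfolded r]] obtain a where a: "w = [Op] @ a @ [Cl]" "lm_deriv [Nt R] rs1' (map Tm a)" by blast
      from dec_TNT[OF D1(2)[unfolded r]] obtain b where b: "w = [Op] @ b @ [Cl]" "lm_deriv [Nt R] rs2' (map Tm b)" by blast
      from a b have "a = b" by simp
      then show ?thesis using IH[of a R rs1' rs2'] a b by simp
    next
      case 7
      then have r: "?r = map Tm [Op] @ (Nt S # map Tm [Op] @ Nt R # map Tm [Cl, Cl])" by simp
      from lm_terms[OF D1(1)[unfolded r]] obtain wa where wa: "w = [Op] @ wa"
        "lm_deriv (Nt S # map Tm [Op] @ Nt R # map Tm [Cl, Cl]) rs1' (map Tm wa)" by blast
      from lm_terms[OF D1(2)[unfolded r]] obtain wb where wb: "w = [Op] @ wb"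
        "lm_deriv (Nt S # map Tm [Op] @ Nt R # map Tm [Cl, Cl]) rs2' (map Tm wb)" by blast
      from dec_NTNT[OF wa(2)] obtain ra1 ra2 a1 a2 where
        a: "rs1' = ra1 @ ra2" "wa = a1 @ [Op] @ a2 @ [Cl, Cl]" "lm_deriv [Nt S] ra1 (map Tm a1)" "lm_deriv [Nt R] ra2 (map Tm a2)" by blast
      from dec_NTNT[OF wb(2)] obtain rb1 rb2 b1 b2 where
        b: "rs2' = rb1 @ rb2" "wb = b1 @ [Op] @ b2 @ [Cl, Cl]" "lm_deriv [Nt S] rb1 (map Tm b1)" "lm_deriv [Nt R] rb2 (map Tm b2)" by blast
      have bal: "bal a1" "bal a2" "bal b1" "bal b2"
        using LS_facts[OF lm_L[OF a(3)]] LR_facts[OF lm_L[OF a(4)]] LS_facts[OF lm_L[OF b(3)]] LR_facts[OF lm_L[OF b(4)]] by auto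
      have "(a1 @ Op # a2 @ [Cl]) @ [Cl] = (b1 @ Op # b2 @ [Cl]) @ [Cl]" using a b wa wb by simp
      then have "a1 @ Op # a2 @ [Cl] = b1 @ Op # b2 @ [Cl]" by (rule append1_eq_conv[THEN iffD1, THEN conjunct1])
      from SU[OF bal(1,2,3,4) this] have e1: "a1 = b1" .
      with a b wa wb have e2: "a2 = b2" by simp
      have "ra1 = rb1" using IH[of a1 S ra1 rb1] a b wa e1 by simp
      moreover have "ra2 = rb2" using IH[of a2 R ra2 rb2] a b wa e2 by simp
      ultimately show ?thesis using a b by simp
    next
      case 8
      then have r: "?r = map Tm [Op] @ Nt S # map Tm [Dot, Cl]" by simp
      from dec_TNT[OF D1(1)[unfolded r]] obtain a where a: "w = [Op] @ a @ [Dot, Cl]" "lm_deriv [Nt S] rs1' (map Tm a)" by blast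
      from dec_TNT[OF D1(2)[unfolded r]] obtain b where b: "w = [Op] @ b @ [Dot, Cl]" "lm_deriv [Nt S] rs2' (map Tm b)" by blast
      from a b have "a = b" by simp
      then show ?thesis using IH[of a S rs1' rs2'] a b by simp
    qed
  qed
  then show ?case using d1 d2 eq by simp
qed

theorem mainTheorem3:
  shows "non_ambiguous S
       \<and> lang S = {w. w \<noteq> [] \<and> is_canonical_ss w}
       \<and> lang R = {w. w \<noteq> [] \<and> is_ss w \<and> is_canonical_ss (Op # w @ [Cl])}"
  using lm_unique lang_S_char lang_R_char unfolding non_ambiguous_def by blast


end
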